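(* Let $r_g>0$, $E>0$ and $n\in\{2,3\}$. For $r>0$ let $X(r)>0$ be the unique positive solution of $$X^n+\sqrt{r_g/r}\;X-E=0,$$ and define $H(r)=(n+1)\sqrt{r_g/r}-\dfrac{nE}{X(r)}$. Then $H$ has exactly one zero $r_H$ on $(0,\infty)$, given by $$r_H=\frac{3r_g}{4E}\quad(n=2),\qquad r_H=r_g\Big(\frac{16}{27E^2}\Big)^{2/3}\quad(n=3),$$ and $H$ is differentiable at $r_H$ with $H'(r_H)\neq0$. Consequently, for any $r_1>r_H$, $\big|\int_{r}^{r_1}ds/H(s)\big|\to\infty$ (logarithmically) as $r\to r_H^+$.
   Context: Physical interpretation: for an ingoing massless test particle of energy $E$ with dispersion relation $F(\zeta)=\zeta^n$ in the Painlevé–Gullstrand Schwarzschild background ($N=f=1$, shift $N^r=-\sqrt{r_g/r}$), the coordinate time along the trajectory is $t=t_0+\int dr/H(r,E)$; the divergence of $t$ at $r_H$ defines an energy-dependent horizon at $r_H$. *)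

theory Defs
  imports "HOL-Analysis.Analysis" "HOL-Library.Landau_Symbols"
begin

definition Xsol :: "real \<Rightarrow> real \<Rightarrow> nat \<Rightarrow> real \<Rightarrow> real" where
  "Xsol rg E n r = (THE X. X > 0 \<and> X ^ n + sqrt (rg / r) * X - E = 0)"

definition Hfun :: "real \<Rightarrow> real \<Rightarrow> nat \<Rightarrow> real \<Rightarrow> real" where
  "Hfun rg E n r = real (n + 1) * sqrt (rg / r) - real n * E / Xsol rg E n r"

definition rHor :: "real \<Rightarrow> real \<Rightarrow> nat \<Rightarrow> real" where
  "rHor rg E n = (if n = 2 then 3 * rg / (4 * E)
                  else rg * (16 / (27 * E ^ 2)) powr (2 / 3))"

end

theory Submission
  imports Defs "HOL-Real_Asymp.Real_Asymp"
begin

lemma asym_integral: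
  fixes H Hd :: "real \<Rightarrow> real" and a b :: real
  assumes ab: "a < b" and H0: "H a = 0"
    and der: "\<And>s. a \<le> s \<Longrightarrow> s \<le> b \<Longrightarrow> (H has_real_derivative Hd s) (at s)"
    and cont: "continuous_on {a..b} Hd"
    and neg: "\<And>s. a \<le> s \<Longrightarrow> s \<le> b \<Longrightarrow> Hd s < 0"
  shows "filterlim (\<lambda>r. \<bar>integral {r..b} (\<lambda>s. 1 / H s)\<bar>) at_top (at_right a)
       \<and> (\<lambda>r. \<bar>integral {r..b} (\<lambda>s. 1 / H s)\<bar>) \<in> \<Theta>[at_right a](\<lambda>r. ln (r - a))"
proof -
  have cmp: "compact {a..b}" "{a..b} \<noteq> {}" using ab by auto
  obtain x1 where x1: "x1 \<in> {a..b}" "\<forall>y\<in>{a..b}. - Hd x1 \<le> - Hd y"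
    using continuous_attains_inf[OF cmp continuous_on_minus[OF cont]] by blast
  obtain x2 where x2: "x2 \<in> {a..b}" "\<forall>y\<in>{a..b}. - Hd y \<le> - Hd x2"
    using continuous_attains_sup[OF cmp continuous_on_minus[OF cont]] by blast
  define m where "m = - Hd x1"
  define M where "M = - Hd x2"
  have m0: "m > 0" using neg x1(1) by (auto simp: m_def)
  have mM: "\<And>y. y \<in> {a..b} \<Longrightarrow> m \<le> - Hd y \<and> - Hd y \<le> M" using x1 x2 by (auto simp: m_def M_def)
  have M0: "M > 0" using mM[of a] m0 ab by auto
  have Hb: "m * (s - a) \<le> - H s \<and> - H s \<le> M * (s - a)" if s: "a < s" "s \<le> b" for s
  proof -
    obtain z where z: "a < z" "z < s" "H s - H a = (s - a) * Hd z"
      using MVT2[OF s(1), of H Hd] der s by auto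
    have "m \<le> - Hd z" "- Hd z \<le> M" using mM[of z] z s by auto
    moreover have "- H s = (s - a) * (- Hd z)" using z H0 by simp
    moreover have "s - a \<ge> 0" using s by simp
    ultimately show ?thesis
      by (metis mult.commute mult_left_mono)
  qed
  define L where "L r = ln (b - a) - ln (r - a)" for r
  have Lint: "((\<lambda>s. 1 / (s - a)) has_integral L r) {r..b}" if r: "a < r" "r \<le> b" for r
  proof -
    have "((\<lambda>s. 1 / (s - a)) has_integral (ln (b - a) - ln (r - a))) {r..b}"
    proof (rule fundamental_theorem_of_calculus[OF r(2)])
      fix x assume "x \<in> {r..b}"
      then have "x - a > 0" using r by auto
      then show "((\<lambda>s. ln (s - a)) has_vector_derivative 1 / (x - a)) (at x within {r..b})"
        by (auto intro!: derivative_eq_intros simp: has_real_derivative_iff_has_vector_derivative[symmetric])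
    qed
    then show ?thesis by (simp add: L_def)
  qed
  define I where "I r = integral {r..b} (\<lambda>s. 1 / H s)" for r
  have Ibd: "L r / M \<le> \<bar>I r\<bar> \<and> \<bar>I r\<bar> \<le> L r / m" if r: "a < r" "r \<le> b" for r
  proof -
    have Hneg: "H s < 0" if "s \<in> {r..b}" for s
    proof -
      have "a < s" "s \<le> b" using that r by auto
      moreover have "0 < m * (s - a)" using m0 \<open>a < s\<close> by simp
      ultimately show ?thesis using Hb[of s] by linarith
    qed
    have "continuous_on {r..b} H"
      by (rule DERIV_continuous_on[where D=Hd]) (use der r in \<open>auto intro: has_field_derivative_at_within\<close>)
    then have "continuous_on {r..b} (\<lambda>s. 1 / H s)"
      using Hneg by (intro continuous_intros) force+
    then have hi: "((\<lambda>s. 1 / H s) has_integral I r) {r..b}"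
      unfolding I_def by (rule integrable_continuous_interval[THEN integrable_integral])
    then have hin: "((\<lambda>s. - (1 / H s)) has_integral - I r) {r..b}"
      by (rule has_integral_neg)
    have l1: "((\<lambda>s. (1 / M) * (1 / (s - a))) has_integral (1/M) * L r) {r..b}"
      by (rule has_integral_mult_right[OF Lint[OF r]])
    have l2: "((\<lambda>s. (1 / m) * (1 / (s - a))) has_integral (1/m) * L r) {r..b}"
      by (rule has_integral_mult_right[OF Lint[OF r]])
    have p1: "(1 / M) * (1 / (s - a)) \<le> - (1 / H s)" if "s \<in> {r..b}" for s
    proof -
      have "a < s" "s \<le> b" using that r by auto
      from Hb[OF this] have h: "- H s \<le> M * (s - a)" "0 < m * (s - a)" "m * (s - a) \<le> - H s" using m0 \<open>a < s\<close> by auto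
      then have "0 < - H s" by linarith
      then have "1 / (M * (s - a)) \<le> 1 / (- H s)" using frac_le[of 1 1 "- H s" "M*(s-a)"] h(1) by simp
      then show ?thesis by simp
    qed
    have p2: "- (1 / H s) \<le> (1 / m) * (1 / (s - a))" if "s \<in> {r..b}" for s
    proof -
      have "a < s" "s \<le> b" using that r by auto
      from Hb[OF this] have h: "m * (s - a) \<le> - H s" "0 < m * (s - a)" using m0 \<open>a < s\<close> by auto
      then have "1 / (- H s) \<le> 1 / (m * (s - a))" using frac_le[of 1 1 "m*(s-a)" "- H s"] by simp
      then show ?thesis by simp
    qed
    have "(1/M) * L r \<le> - I r" by (rule has_integral_le[OF l1 hin p1])
    moreover have "- I r \<le> (1/m) * L r" by (rule has_integral_le[OF hin l2 p2])
    moreover have "L r \<ge> 0" using r ab by (simp add: L_def)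
    moreover have "L r / M \<ge> 0" using \<open>L r \<ge> 0\<close> M0 by simp
    ultimately show ?thesis by auto
  qed
  have lnbot: "filterlim (\<lambda>r. ln (r - a)) at_bot (at_right a)"
    by real_asymp
  have Ltop: "filterlim (\<lambda>r. L r / M) at_top (at_right a)"
    unfolding L_def using M0 by real_asymp
  have ev1: "eventually (\<lambda>r. a < r \<and> r \<le> b) (at_right a)"
    using ab by (auto simp: eventually_at_right[OF ab] intro!: exI[of _ b])
  have ev2: "eventually (\<lambda>r. ln (r - a) \<le> -2 * \<bar>ln (b - a)\<bar> - 1) (at_right a)"
    using lnbot by (simp add: filterlim_at_bot)
  have ev: "eventually (\<lambda>r. a < r \<and> r \<le> b \<and> ln (r - a) \<le> -2 * \<bar>ln (b - a)\<bar> - 1) (at_right a)"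
    using eventually_conj[OF ev1 ev2] by simp
  have lim: "filterlim (\<lambda>r. \<bar>I r\<bar>) at_top (at_right a)"
    by (rule filterlim_at_top_mono[OF Ltop]) (use ev1 Ibd in \<open>auto elim!: eventually_mono\<close>)
  have O1: "(\<lambda>r. \<bar>I r\<bar>) \<in> O[at_right a](\<lambda>r. ln (r - a))"
  proof (rule bigoI[where c = "2 / m"])
    show "eventually (\<lambda>r. norm \<bar>I r\<bar> \<le> 2 / m * norm (ln (r - a))) (at_right a)"
      using ev
    proof (rule eventually_mono)
      fix r assume r: "a < r \<and> r \<le> b \<and> ln (r - a) \<le> -2 * \<bar>ln (b - a)\<bar> - 1"
      have "L r \<le> 2 * \<bar>ln (r - a)\<bar>"
        using r[THEN conjunct2, THEN conjunct2] abs_ge_self[of "ln (b - a)"] abs_ge_zero[of "ln (b - a)"] unfolding L_def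
        by (smt (verit))
      then have "L r / m \<le> 2 / m * \<bar>ln (r - a)\<bar>" using m0 by (simp add: divide_right_mono)
      then show "norm \<bar>I r\<bar> \<le> 2 / m * norm (ln (r - a))" using Ibd[of r] r by simp
    qed
  qed
  have O2: "(\<lambda>r. ln (r - a)) \<in> O[at_right a](\<lambda>r. \<bar>I r\<bar>)"
  proof (rule bigoI[where c = "2 * M"])
    show "eventually (\<lambda>r. norm (ln (r - a)) \<le> 2 * M * norm \<bar>I r\<bar>) (at_right a)"
      using ev
    proof (rule eventually_mono)
      fix r assume r: "a < r \<and> r \<le> b \<and> ln (r - a) \<le> -2 * \<bar>ln (b - a)\<bar> - 1"
      have "\<bar>ln (r - a)\<bar> \<le> 2 * L r"
        using r[THEN conjunct2, THEN conjunct2] abs_ge_minus_self[of "ln (b - a)"] abs_ge_zero[of "ln (b - a)"] unfolding L_def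
        by (smt (verit))
      moreover have "L r \<le> M * \<bar>I r\<bar>" using Ibd[of r] r M0 by (simp add: field_simps)
      ultimately show "norm (ln (r - a)) \<le> 2 * M * norm \<bar>I r\<bar>" by simp
    qed
  qed
  have "(\<lambda>r. \<bar>I r\<bar>) \<in> \<Theta>[at_right a](\<lambda>r. ln (r - a))"
    using O1 O2 by (auto simp: bigomega_iff_bigo)
  then show ?thesis using lim unfolding I_def by simp
qed

definition gg :: "real \<Rightarrow> nat \<Rightarrow> real \<Rightarrow> real" where
  "gg E n x = E / x - x ^ (n - 1)"
definition ggd :: "real \<Rightarrow> nat \<Rightarrow> real \<Rightarrow> real" where
  "ggd E n x = - E / x\<^sup>2 - real (n - 1) * x ^ (n - 1 - 1)"
definition phi :: "real \<Rightarrow> real \<Rightarrow> nat \<Rightarrow> real \<Rightarrow> real" where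
  "phi rg E n x = rg / (gg E n x)\<^sup>2"
definition phid :: "real \<Rightarrow> real \<Rightarrow> nat \<Rightarrow> real \<Rightarrow> real" where
  "phid rg E n x = - (rg * (2 * gg E n x * ggd E n x)) / ((gg E n x)\<^sup>2)\<^sup>2"
definition hh :: "real \<Rightarrow> nat \<Rightarrow> real \<Rightarrow> real" where
  "hh E n x = E / x - real (n + 1) * x ^ (n - 1)"
definition hhd :: "real \<Rightarrow> nat \<Rightarrow> real \<Rightarrow> real" where
  "hhd E n x = - E / x\<^sup>2 - real (n + 1) * (real (n - 1) * x ^ (n - 1 - 1))"

context
  fixes rg E :: real and n :: nat
  assumes rg: "rg > 0" and E: "E > 0" and n: "n \<ge> 1"
begin

lemma pow_split: "x ^ n = x * x ^ (n - 1)"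
  using n by (metis Suc_diff_1 less_le_trans zero_less_one power_Suc)

lemma uniq:
  assumes "a \<ge> 0" "x > 0" "y > 0" "x ^ n + a * x - E = 0" "y ^ n + a * y - E = 0"
  shows "x = y"
proof (rule ccontr)
  assume "x \<noteq> y"
  then consider "x < y" | "y < x" by linarith
  then show False
  proof cases
    case 1
    then have "x ^ n < y ^ n" using assms n by (intro power_strict_mono) auto
    moreover have "a * x \<le> a * y" using 1 assms by (intro mult_left_mono) auto
    ultimately show False using assms by linarith
  next
    case 2
    then have "y ^ n < x ^ n" using assms n by (intro power_strict_mono) auto
    moreover have "a * y \<le> a * x" using 2 assms by (intro mult_left_mono) auto
    ultimately show False using assms by linarith
  qed
qed

lemma exist:
  assumes "a \<ge> 0"
  shows "\<exists>x > 0. x ^ n + a * x - E = 0"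
proof -
  define B where "B = max 1 E"
  have "B ^ 1 \<le> B ^ n" using n by (intro power_increasing) (auto simp: B_def)
  then have "B ^ n \<ge> B" by simp
  moreover have "E \<le> B" "a * B \<ge> 0" using assms by (auto simp: B_def)
  ultimately have fb: "E \<le> B ^ n + a * B" by linarith
  have "\<exists>x\<ge>0. x \<le> B \<and> x ^ n + a * x = E"
    by (rule IVT') (use fb E n in \<open>auto simp: B_def[symmetric] intro!: continuous_intros\<close>, use n in \<open>simp_all add: B_def power_0_left\<close>)
  then obtain x where x: "x \<ge> 0" "x ^ n + a * x = E" by blast
  then have "x \<noteq> 0" using E n by (auto simp: power_0_left)
  then show ?thesis using x by (intro exI[of _ x]) auto
qed

lemma Xsol_prop:
  assumes r: "r > 0"
  shows "Xsol rg E n r > 0 \<and> (Xsol rg E n r) ^ n + sqrt (rg / r) * Xsol rg E n r - E = 0"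
proof -
  have a: "sqrt (rg / r) \<ge> 0" using rg r by simp
  obtain x where x: "x > 0" "x ^ n + sqrt (rg / r) * x - E = 0" using exist[OF a] by blast
  show ?thesis unfolding Xsol_def
    by (rule theI[of _ x]) (use x uniq[OF a] in auto)
qed

lemma Xsol_facts:
  assumes r: "r > 0"
  shows "Xsol rg E n r > 0" "(Xsol rg E n r) ^ n < E" "gg E n (Xsol rg E n r) = sqrt (rg / r)"
    "phi rg E n (Xsol rg E n r) = r" "Hfun rg E n r = hh E n (Xsol rg E n r)"
proof -
  define X where "X = Xsol rg E n r"
  define a where "a = sqrt (rg / r)"
  have X: "X > 0" "X ^ n + a * X - E = 0" using Xsol_prop[OF r] by (auto simp: X_def a_def)
  have a: "a > 0" using rg r by (simp add: a_def)
  show "Xsol rg E n r > 0" using X by (simp add: X_def)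
  show "(Xsol rg E n r) ^ n < E" using X a by (simp add: X_def[symmetric]) (smt (verit) mult_pos_pos)
  have ga: "gg E n X = a"
  proof -
    have "E = X * X ^ (n - 1) + a * X" using X pow_split[of X] by simp
    then show ?thesis using X by (simp add: gg_def field_simps)
  qed
  then show "gg E n (Xsol rg E n r) = sqrt (rg / r)" by (simp add: X_def a_def)
  show "phi rg E n (Xsol rg E n r) = r"
    using ga rg r by (simp add: phi_def X_def[symmetric] a_def)
  show "Hfun rg E n r = hh E n (Xsol rg E n r)"
    using ga X unfolding Hfun_def hh_def X_def[symmetric] a_def[symmetric]
    by (simp add: gg_def field_simps)
qed

lemma gg_pos: assumes "x > 0" "x ^ n < E" shows "gg E n x > 0"
proof -
  have "gg E n x = (E - x ^ n) / x" using assms pow_split[of x] by (simp add: gg_def field_simps)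
  then show ?thesis using assms by simp
qed

lemma Xsol_phi: assumes x: "x > 0" "x ^ n < E" shows "Xsol rg E n (phi rg E n x) = x"
proof -
  have g: "gg E n x > 0" using gg_pos[OF x] .
  have p: "phi rg E n x > 0" using g rg by (simp add: phi_def)
  have s: "sqrt (rg / phi rg E n x) = gg E n x" using g rg by (simp add: phi_def)
  have eq: "x ^ n + gg E n x * x - E = 0" using x pow_split[of x] by (simp add: gg_def field_simps)
  show ?thesis
    using uniq[of "sqrt (rg / phi rg E n x)" "Xsol rg E n (phi rg E n x)" x] Xsol_prop[OF p] x eq s g
    by auto
qed

lemma gg_deriv: "x > 0 \<Longrightarrow> (gg E n has_real_derivative ggd E n x) (at x)"
  unfolding gg_def[abs_def] ggd_def
  by (auto intro!: derivative_eq_intros simp: power2_eq_square field_simps)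

lemma hh_deriv: "x > 0 \<Longrightarrow> (hh E n has_real_derivative hhd E n x) (at x)"
  unfolding hh_def[abs_def] hhd_def
  by (auto intro!: derivative_eq_intros simp: power2_eq_square field_simps)

lemma phi_deriv: assumes "x > 0" "gg E n x \<noteq> 0"
  shows "(phi rg E n has_real_derivative phid rg E n x) (at x)"
  unfolding phi_def[abs_def] phid_def
  by (rule derivative_eq_intros gg_deriv[OF assms(1)] refl | use assms in simp)+

lemma ggd_neg: assumes "x > 0" shows "ggd E n x < 0"
proof -
  have "E / x\<^sup>2 > 0" using E assms by simp
  moreover have "real (n - 1) * x ^ (n - 1 - 1) \<ge> 0" using assms by simp
  ultimately show ?thesis unfolding ggd_def by simp
qed

lemma hhd_neg: assumes "x > 0" shows "hhd E n x < 0"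
proof -
  have "E / x\<^sup>2 > 0" using E assms by simp
  moreover have "real (n + 1) * (real (n - 1) * x ^ (n - 1 - 1)) \<ge> 0" using assms by simp
  ultimately show ?thesis unfolding hhd_def by simp
qed

lemma phid_pos: assumes "x > 0" "x ^ n < E" shows "phid rg E n x > 0"
proof -
  have g: "gg E n x > 0" using gg_pos[OF assms] .
  have "ggd E n x < 0" using ggd_neg assms by simp
  then have "rg * (2 * gg E n x * ggd E n x) < 0" using g rg by (simp add: mult_pos_neg)
  moreover have "((gg E n x)\<^sup>2)\<^sup>2 > 0" using g by simp
  ultimately have "rg * (2 * gg E n x * ggd E n x) / ((gg E n x)\<^sup>2)\<^sup>2 < 0" by (rule divide_neg_pos)
  then show ?thesis unfolding phid_def by (simp only: minus_divide_left[symmetric] neg_0_less_iff_less)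
qed

lemma below_root: assumes "z > 0" shows "z ^ n < E \<longleftrightarrow> z < root n E"
proof
  have c: "root n E ^ n = E" "root n E > 0" using n E by (auto intro: real_root_pow_pos)
  show "z ^ n < E \<Longrightarrow> z < root n E"
    using c power_less_imp_less_base[of z n "root n E"] by simp
  show "z < root n E \<Longrightarrow> z ^ n < E"
    using c power_strict_mono[of z "root n E" n] assms n by simp
qed

lemma Xsol_isCont: assumes r: "r > 0" shows "isCont (Xsol rg E n) r"
proof -
  define X where "X = Xsol rg E n r"
  define c where "c = root n E"
  have X: "X > 0" "X < c" using Xsol_facts[OF r] below_root by (auto simp: X_def c_def)
  define d where "d = min X (c - X) / 2"
  have d: "d > 0" using X by (simp add: d_def)
  have z: "z > 0" "z ^ n < E" if "\<bar>z - X\<bar> \<le> d" for z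
  proof -
    have b: "X - d \<le> z" "z \<le> X + d" using that by (auto simp: abs_le_iff)
    have "d < X" "X + d < c" using X by (auto simp: d_def min_def field_simps)
    then show "z > 0" using b by linarith
    moreover have "z < c" using b \<open>X + d < c\<close> by linarith
    ultimately show "z ^ n < E" using below_root c_def by simp
  qed
  have "isCont (Xsol rg E n) (phi rg E n X)"
  proof (rule isCont_inverse_function[OF d, where f="phi rg E n" and g = "Xsol rg E n" and x = X])
    fix z assume "\<bar>z - X\<bar> \<le> d"
    note zz = z[OF this]
    show "Xsol rg E n (phi rg E n z) = z" using Xsol_phi zz by simp
    show "isCont (phi rg E n) z"
      using phi_deriv[of z] gg_pos[OF zz] zz by (auto intro: DERIV_isCont)
  qed
  then show ?thesis using Xsol_facts[OF r] by (simp add: X_def)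
qed

lemma Xsol_deriv: assumes r: "r > 0"
  shows "(Xsol rg E n has_real_derivative inverse (phid rg E n (Xsol rg E n r))) (at r)"
proof (rule DERIV_inverse_function[where a = 0 and b = "r + 1"])
  have X: "Xsol rg E n r > 0" "Xsol rg E n r ^ n < E" using Xsol_facts[OF r] by auto
  show "(phi rg E n has_real_derivative phid rg E n (Xsol rg E n r)) (at (Xsol rg E n r))"
    using phi_deriv[OF X(1)] gg_pos[OF X] by simp
  show "phid rg E n (Xsol rg E n r) \<noteq> 0" using phid_pos[OF X] by simp
  show "0 < r" "r < r + 1" using r by auto
  show "phi rg E n (Xsol rg E n y) = y" if "0 < y" "y < r + 1" for y using Xsol_facts that by simp
  show "isCont (Xsol rg E n) r" using Xsol_isCont[OF r] .
qed

definition Hd :: "real \<Rightarrow> real" where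
  "Hd r = hhd E n (Xsol rg E n r) * inverse (phid rg E n (Xsol rg E n r))"

lemma Hfun_deriv: assumes r: "r > 0"
  shows "(Hfun rg E n has_real_derivative Hd r) (at r)"
proof -
  have X: "Xsol rg E n r > 0" using Xsol_facts[OF r] by auto
  have "((\<lambda>r. hh E n (Xsol rg E n r)) has_real_derivative Hd r) (at r)"
    unfolding Hd_def by (rule DERIV_chain2[OF hh_deriv[OF X] Xsol_deriv[OF r]])
  then show ?thesis
    by (rule has_field_derivative_transform_within_open[where S = "{0<..}"])
       (use r Xsol_facts in auto)
qed

lemma Hd_neg: assumes r: "r > 0" shows "Hd r < 0"
proof -
  have X: "Xsol rg E n r > 0" "Xsol rg E n r ^ n < E" using Xsol_facts[OF r] by auto
  show ?thesis unfolding Hd_def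
    using hhd_neg[OF X(1)] phid_pos[OF X] by (simp add: mult_neg_pos)
qed

lemma Hd_isCont: assumes r: "r > 0" shows "isCont Hd r"
proof -
  define X where "X = Xsol rg E n r"
  have X: "X > 0" "X ^ n < E" using Xsol_facts[OF r] by (auto simp: X_def)
  have g: "gg E n X \<noteq> 0" using gg_pos[OF X] by simp
  have p: "phid rg E n X \<noteq> 0" using phid_pos[OF X] by simp
  have "isCont (\<lambda>x. hhd E n x * inverse (phid rg E n x)) X"
    using X g p unfolding hhd_def phid_def ggd_def gg_def
    by (intro continuous_intros) (auto simp: gg_def)
  then have "isCont (\<lambda>r. hhd E n (Xsol rg E n r) * inverse (phid rg E n (Xsol rg E n r))) r"
    using isCont_o2[OF Xsol_isCont[OF r]] X_def by blast
  then show ?thesis unfolding Hd_def[abs_def] .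
qed

definition x0 :: real where "x0 = root n (E / real (n + 1))"

lemma x0_facts: "x0 > 0" "x0 ^ n = E / real (n + 1)" "x0 ^ n < E"
proof -
  have q: "E / real (n + 1) > 0" using E by simp
  show "x0 > 0" using q n by (simp add: x0_def)
  show xn: "x0 ^ n = E / real (n + 1)" using q n by (simp add: x0_def real_root_pow_pos)
  have "E / real (n + 1) < E" using E n by (simp add: field_simps)
  then show "x0 ^ n < E" using xn by simp
qed

lemma hh_zero_iff: assumes "x > 0" shows "hh E n x = 0 \<longleftrightarrow> x = x0"
proof -
  have "hh E n x = (E - real (n + 1) * x ^ n) / x"
    using assms pow_split[of x] by (simp add: hh_def field_simps)
  then have "hh E n x = 0 \<longleftrightarrow> E - real (n + 1) * x ^ n = 0" using assms by simp
  also have "\<dots> \<longleftrightarrow> x ^ n = E / real (n + 1)" by (auto simp: field_simps)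
  also have "\<dots> \<longleftrightarrow> x ^ n = x0 ^ n" using x0_facts(2) by simp
  also have "\<dots> \<longleftrightarrow> x = x0"
    using assms x0_facts(1) n power_eq_imp_eq_base[of x n x0] by auto
  finally show ?thesis .
qed

lemma zero_iff: assumes r: "r > 0" shows "Hfun rg E n r = 0 \<longleftrightarrow> r = phi rg E n x0"
proof
  assume "Hfun rg E n r = 0"
  then have "Xsol rg E n r = x0" using Xsol_facts[OF r] hh_zero_iff by simp
  then show "r = phi rg E n x0" using Xsol_facts(4)[OF r] by simp
next
  assume "r = phi rg E n x0"
  then have "Xsol rg E n r = x0" using Xsol_phi x0_facts by simp
  then show "Hfun rg E n r = 0" using Xsol_facts(5)[OF r] hh_zero_iff x0_facts by simp
qed

lemma phi_x0_pos: "phi rg E n x0 > 0"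
  using gg_pos[OF x0_facts(1,3)] rg by (simp add: phi_def)

lemma phi_alt: assumes "x > 0" shows "phi rg E n x = rg * x\<^sup>2 / (E - x ^ n)\<^sup>2"
proof -
  have "gg E n x = (E - x ^ n) / x" using assms pow_split[of x] by (simp add: gg_def field_simps)
  then show ?thesis using assms by (simp add: phi_def power_divide)
qed

end

lemma rHor_eq:
  assumes rg: "rg > 0" and E: "E > 0" and n: "n \<in> {2, 3}"
  shows "rHor rg E n = phi rg E n (x0 E n)"
proof -
  have n1: "n \<ge> 1" using n by auto
  note xf = x0_facts[OF rg E n1]
  have pa: "phi rg E n (x0 E n) = rg * (x0 E n)\<^sup>2 / (E - (x0 E n) ^ n)\<^sup>2"
    using phi_alt[OF rg E n1 xf(1)] .
  show ?thesis
  proof (cases "n = 2")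
    case True
    then have x2: "(x0 E n)\<^sup>2 = E / 3" using xf(2) by simp
    have "phi rg E n (x0 E n) = rg * (x0 E n)\<^sup>2 / (E - (x0 E n)\<^sup>2)\<^sup>2" using pa True by simp
    also have "\<dots> = rg * (E / 3) / (E - E / 3)\<^sup>2" by (simp only: x2)
    also have "\<dots> = 3 * rg / (4 * E)" using E by (simp add: field_simps power2_eq_square)
    finally show ?thesis using True by (simp add: rHor_def)
  next
    case False
    then have n3: "n = 3" using n by auto
    define x where "x = x0 E n"
    have x: "x > 0" "x ^ 3 = E / 4" using xf n3 by (auto simp: x_def)
    define z where "z = 16 / (27 * E ^ 2)"
    have z: "z > 0" using E by (simp add: z_def)
    define P where "P = z powr (2/3)"
    have P: "P > 0" using z by (simp add: P_def)
    have "P ^ 3 = z powr (2/3 + 2/3 + 2/3)" unfolding P_def power3_eq_cube powr_add by simp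
    also have "\<dots> = z ^ 2" using z by (simp add: powr_numeral)
    finally have P3: "P ^ 3 = z ^ 2" .
    define Q where "Q = x\<^sup>2 * 16 / (9 * E ^ 2)"
    have Q: "Q > 0" using x E by (simp add: Q_def)
    have "Q ^ 3 = (x ^ 3) ^ 2 * 16 ^ 3 / (9 ^ 3 * E ^ 6)"
      by (simp add: Q_def power_mult_distrib power_divide flip: power_mult)
    also have "\<dots> = z ^ 2" using E by (simp only: x(2)) (simp add: z_def power_divide field_simps)
    finally have "Q ^ 3 = P ^ 3" using P3 by simp
    then have QP: "Q = P" using P Q by (simp add: power_eq_iff_eq_base)
    have "phi rg E n (x0 E n) = rg * x\<^sup>2 / (E - x ^ 3)\<^sup>2" using pa n3 by (simp add: x_def)
    also have "\<dots> = rg * x\<^sup>2 / (E - E / 4)\<^sup>2" by (simp only: x(2))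
    also have "\<dots> = rg * Q" using E by (simp add: Q_def field_simps power2_eq_square)
    finally have "phi rg E n (x0 E n) = rg * Q" .
    then show ?thesis using n3 QP by (simp add: rHor_def P_def z_def)
  qed
qed


theorem mainTheorem5:
  fixes rg E :: real and n :: nat
  assumes "rg > 0" and "E > 0" and "n \<in> {2, 3}"
  shows "{r. r > 0 \<and> Hfun rg E n r = 0} = {rHor rg E n}
    \<and> (\<exists>D. (Hfun rg E n has_real_derivative D) (at (rHor rg E n)) \<and> D \<noteq> 0)
    \<and> (\<forall>r1 > rHor rg E n.
         filterlim (\<lambda>r. \<bar>integral {r..r1} (\<lambda>s. 1 / Hfun rg E n s)\<bar>) at_top
                   (at_right (rHor rg E n))
       \<and> (\<lambda>r. \<bar>integral {r..r1} (\<lambda>s. 1 / Hfun rg E n s)\<bar>)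
           \<in> \<Theta>[at_right (rHor rg E n)](\<lambda>r. ln (r - rHor rg E n)))"
proof -
  note rg = assms(1) and E = assms(2)
  have n1: "n \<ge> 1" using assms(3) by auto
  have rH: "rHor rg E n = phi rg E n (x0 E n)" using rHor_eq[OF assms] .
  have rH0: "rHor rg E n > 0" using phi_x0_pos[OF rg E n1] rH by simp
  have A: "{r. r > 0 \<and> Hfun rg E n r = 0} = {rHor rg E n}"
    using zero_iff[OF rg E n1] rH rH0 by auto
  have B: "\<exists>D. (Hfun rg E n has_real_derivative D) (at (rHor rg E n)) \<and> D \<noteq> 0"
    using Hfun_deriv[OF rg E n1 rH0] Hd_neg[OF rg E n1 rH0] by (intro exI[of _ "Hd rg E n (rHor rg E n)"]) auto
  have C: "filterlim (\<lambda>r. \<bar>integral {r..r1} (\<lambda>s. 1 / Hfun rg E n s)\<bar>) at_top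
                   (at_right (rHor rg E n))
       \<and> (\<lambda>r. \<bar>integral {r..r1} (\<lambda>s. 1 / Hfun rg E n s)\<bar>)
           \<in> \<Theta>[at_right (rHor rg E n)](\<lambda>r. ln (r - rHor rg E n))" if r1: "r1 > rHor rg E n" for r1
  proof (rule asym_integral[OF r1, where Hd = "Hd rg E n"])
    have H0: "Hfun rg E n (rHor rg E n) = 0" using A by auto
    show "Hfun rg E n (rHor rg E n) = 0" by (rule H0)
    show "(Hfun rg E n has_real_derivative Hd rg E n s) (at s)" if "rHor rg E n \<le> s" for s
      using Hfun_deriv[OF rg E n1] that rH0 by simp
    show "continuous_on {rHor rg E n..r1} (Hd rg E n)"
      using Hd_isCont[OF rg E n1] rH0 by (intro continuous_at_imp_continuous_on) auto
    show "Hd rg E n s < 0" if "rHor rg E n \<le> s" for s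
      using Hd_neg[OF rg E n1] that rH0 by simp
  qed
  show ?thesis using A B C by blast
qed

end
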